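(* Let $\mathcal{O}=\mathcal{F}_\mathcal{M}/(\mathcal{G})$ be a shuffle operad with monomial relations $\mathcal{G}$, and assume that for every tree monomial $T$ the set of divisors of $T$ that are relations admits an Anick numbering $S_1,\dots,S_p$, which we fix. Then for each tree monomial $T$, a basis of $H^Q_T(\mathcal{O})$ is in one-to-one correspondence with the basis elements $v$ of $(\mathcal{A}_\mathcal{G})^{ab}_T$ for which the following two properties hold: (I) for each $S_j$ present in $v$, $\partial_j(v)$ is decomposable (i.e. equals $0$ in $(\mathcal{A}_\mathcal{G})^{ab}$); (II) for each $S_j$ not present in $v$, there exists $i<j$ such that $\partial_i(v\wedge S_j)$ is indecomposable (i.e. nonzero in $(\mathcal{A}_\mathcal{G})^{ab}$).
   Context: $\mathcal{F}_\mathcal{M}$ is the free shuffle operad on a collection $\mathcal{M}$ over a field; it has a basis of tree monomials. A divisor of a tree monomial $T$ is an occurrence in $T$ of a subtree containing, with each vertex, all its incoming and outgoing edges; it determines a tree monomial by keeping decorations and relabelling leaves in order of the smallest leaf of $T$ reachable through them; it is a relation if this tree monomial lies in $\mathcal{G}$. An Anick numbering of the divisors of $T$ that are relations is a numbering $S_1,\dots,S_p$ such that whenever $i<j<k$ and $S_i\cap S_j\ne\varnothing$ we have $S_i\cap S_k\subset S_j\cap S_k$ (naive intersections of subtrees in $T$). For a tree monomial $T$ with relation divisors $S_1,\dots,S_p$, consider the elements $T\otimes S_{i_1}\wedge\cdots\wedge S_{i_q}$ of $\mathbb{k}T\otimes\Lambda(S_1,\dots,S_p)$ (exterior algebra, $S_i$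 of degree $1$), with the degree $-1$ derivations $\partial_i$, $\partial_i(S_j)=\delta_{ij}$. Such an element is indecomposable if every edge of $T$ joining two internal vertices of $T$ joins two internal vertices of at least one of $S_{i_1},\dots,S_{i_q}$, and decomposable otherwise. $(\mathcal{A}_\mathcal{G})^{ab}_T$ is the chain complex with basis the indecomposable elements with underlying tree monomial $T$ (these are the indecomposable generators of the free dg shuffle operad resolution $\mathcal{A}_\mathcal{G}$ of $\mathcal{O}$ with underlying tree $T$) and differential $\sum_i\bar\partial_i$, where $\bar\partial_i(v)=\partial_i(v)$ if $\partial_i(v)$ is indecomposable and $\bar\partial_i(v)=0$ otherwise; $H^Q_T(\mathcal{O})$ denotes its homology (the $T$-component of the Quillen homology of $\mathcal{O}$, which is the direct sum of these over all $T$). *)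

theory Defs
  imports Complex_Main "HOL-Library.Function_Algebras"
begin

text \<open>A tree monomial: a rooted planar tree whose internal vertices are decorated
by basis elements of the collection M (of type 'm, with arity function ar) and
whose leaves carry labels 1..n.\<close>

datatype 'm tree = Leaf nat | Node 'm "'m tree list"

fun leaves :: "'m tree \<Rightarrow> nat list" where
  "leaves (Leaf i) = [i]"
| "leaves (Node m ts) = concat (map leaves ts)"

definition minleaf :: "'m tree \<Rightarrow> nat" where
  "minleaf t = Min (set (leaves t))"

fun wf_shuffle :: "('m \<Rightarrow> nat) \<Rightarrow> 'm tree \<Rightarrow> bool" where
  "wf_shuffle ar (Leaf i) = True"
| "wf_shuffle ar (Node m ts) =
     (length ts = ar m \<and> ts \<noteq> [] \<and> (\<forall>t\<in>set ts. wf_shuffle ar t)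
      \<and> sorted_wrt (<) (map minleaf ts))"

definition tree_monomial :: "('m \<Rightarrow> nat) \<Rightarrow> 'm tree \<Rightarrow> bool" where
  "tree_monomial ar T \<longleftrightarrow> wf_shuffle ar T \<and> distinct (leaves T)
      \<and> set (leaves T) = {1..length (leaves T)}"

fun sub :: "'m tree \<Rightarrow> nat list \<Rightarrow> 'm tree option" where
  "sub t [] = Some t"
| "sub (Leaf _) (i # p) = None"
| "sub (Node m ts) (i # p) = (if i < length ts then sub (ts ! i) p else None)"

definition vertices :: "'m tree \<Rightarrow> nat list set" where
  "vertices T = {p. \<exists>m ts. sub T p = Some (Node m ts)}"

definition internal_edges :: "'m tree \<Rightarrow> (nat list \<times> nat list) set" where
  "internal_edges T = {(p, q). p \<in> vertices T \<and> q \<in> vertices T \<and> (\<exists>k. q = p @ [k])}"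

text \<open>A divisor (occurrence of a subtree containing, with each vertex, all its
incident edges) is determined by its nonempty connected set of internal vertices.\<close>
definition is_divisor :: "'m tree \<Rightarrow> nat list set \<Rightarrow> bool" where
  "is_divisor T D \<longleftrightarrow> D \<noteq> {} \<and> D \<subseteq> vertices T \<and>
     (\<exists>r\<in>D. \<forall>p\<in>D. \<exists>u. p = r @ u \<and> (\<forall>k\<le>length u. r @ take k u \<in> D))"

definition div_root :: "nat list set \<Rightarrow> nat list" where
  "div_root D = (THE r. r \<in> D \<and> (\<forall>p\<in>D. \<exists>u. p = r @ u))"

text \<open>Cut out the divisor: vertices of D are kept, every edge leaving D downwards
becomes a leaf labelled by the smallest leaf of T reachable through it.\<close>
function ext :: "nat list set \<Rightarrow> nat list \<Rightarrow> 'm tree \<Rightarrow> 'm tree" where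
  "ext D p (Leaf i) = Leaf i"
| "ext D p (Node m ts) =
     (if p \<in> D then Node m (map (\<lambda>i. ext D (p @ [i]) (ts ! i)) [0..<length ts])
      else Leaf (minleaf (Node m ts)))"
  by pat_completeness auto
termination
  by (relation "measure (\<lambda>(D, p, t). size t)")
     (auto simp: size_list_estimation' dest!: nth_mem intro: le_imp_less_Suc)

fun map_leaves :: "(nat \<Rightarrow> nat) \<Rightarrow> 'm tree \<Rightarrow> 'm tree" where
  "map_leaves f (Leaf i) = Leaf (f i)"
| "map_leaves f (Node m ts) = Node m (map (map_leaves f) ts)"

definition relabel :: "'m tree \<Rightarrow> 'm tree" where
  "relabel t = map_leaves (\<lambda>x. card {y \<in> set (leaves t). y \<le> x}) t"

definition divisor_monomial :: "'m tree \<Rightarrow> nat list set \<Rightarrow> 'm tree" where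
  "divisor_monomial T D = relabel (ext D (div_root D) (the (sub T (div_root D))))"

definition relation_divisors :: "'m tree set \<Rightarrow> 'm tree \<Rightarrow> nat list set set" where
  "relation_divisors G T = {D. is_divisor T D \<and> divisor_monomial T D \<in> G}"

text \<open>Anick numbering S_0, ..., S_(p-1) (0-based) of the relation divisors,
intersections taken as sets of vertices.\<close>
definition anick_numbering :: "'m tree set \<Rightarrow> 'm tree \<Rightarrow> nat list set list \<Rightarrow> bool" where
  "anick_numbering G T Ss \<longleftrightarrow> distinct Ss \<and> set Ss = relation_divisors G T \<and>
     (\<forall>i j k. i < j \<and> j < k \<and> k < length Ss \<and> Ss ! i \<inter> Ss ! j \<noteq> {}
        \<longrightarrow> Ss ! i \<inter> Ss ! k \<subseteq> Ss ! j \<inter> Ss ! k)"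

text \<open>An element T \<otimes> S_{i_1} \<and> ... \<and> S_{i_q} is encoded by the index set
{i_1,...,i_q} \<subseteq> {0..<p}.\<close>
definition indecomposable :: "'m tree \<Rightarrow> nat list set list \<Rightarrow> nat set \<Rightarrow> bool" where
  "indecomposable T Ss I \<longleftrightarrow> I \<subseteq> {0..<length Ss} \<and>
     (\<forall>(p, q)\<in>internal_edges T. \<exists>i\<in>I. p \<in> Ss ! i \<and> q \<in> Ss ! i)"

definition ab_basis :: "'m tree \<Rightarrow> nat list set list \<Rightarrow> nat set set" where
  "ab_basis T Ss = {I. indecomposable T Ss I}"

text \<open>Sign of the derivation \<partial>_i on the wedge of the S_k, k \<in> I, in increasing order.\<close>
definition wsign :: "nat set \<Rightarrow> nat \<Rightarrow> 'k::field" where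
  "wsign I i = (- 1) ^ card {k \<in> I. k < i}"

definition chains :: "'m tree \<Rightarrow> nat list set list \<Rightarrow> (nat set \<Rightarrow> 'k::field) set" where
  "chains T Ss = {f. \<forall>J. J \<notin> ab_basis T Ss \<longrightarrow> f J = 0}"

text \<open>The differential \<Sum>_i \<partial>bar_i in coordinates: the coefficient of a basis
element J in d(f) collects the contributions of \<partial>bar_i(I) = \<pm> J for I = J \<union> {i}
(\<partial>bar_i(I) is nonzero only when i \<in> I and I - {i} is indecomposable).\<close>
definition ab_diff :: "'m tree \<Rightarrow> nat list set list \<Rightarrow> (nat set \<Rightarrow> 'k::field) \<Rightarrow> nat set \<Rightarrow> 'k" where
  "ab_diff T Ss f J =
     (if J \<in> ab_basis T Ss then
        (\<Sum>i\<in>{0..<length Ss} - J.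
           if insert i J \<in> ab_basis T Ss then wsign (insert i J) i * f (insert i J) else 0)
      else 0)"

definition fscale :: "'k::field \<Rightarrow> (nat set \<Rightarrow> 'k) \<Rightarrow> nat set \<Rightarrow> 'k" where
  "fscale c f = (\<lambda>x. c * f x)"

definition quillen_homology_dim :: "'k::field itself \<Rightarrow> 'm tree \<Rightarrow> nat list set list \<Rightarrow> nat" where
  "quillen_homology_dim _ T Ss =
     vector_space.dim (fscale :: 'k \<Rightarrow> _) {f \<in> chains T Ss. ab_diff T Ss f = (\<lambda>_. 0 :: 'k)}
     - vector_space.dim (fscale :: 'k \<Rightarrow> _) (ab_diff T Ss ` (chains T Ss :: (nat set \<Rightarrow> 'k) set))"

definition critical_elements :: "'m tree \<Rightarrow> nat list set list \<Rightarrow> nat set set" where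
  "critical_elements T Ss = {I \<in> ab_basis T Ss.
     (\<forall>j\<in>I. I - {j} \<notin> ab_basis T Ss) \<and>
     (\<forall>j<length Ss. j \<notin> I \<longrightarrow>
        (\<exists>i<j. i \<in> insert j I \<and> insert j I - {i} \<in> ab_basis T Ss))}"

end

theory Submission
  imports Defs
begin


definition covers :: "('v \<times> 'v) set \<Rightarrow> (nat \<Rightarrow> 'v set) \<Rightarrow> nat set \<Rightarrow> bool" where
  "covers A S I \<longleftrightarrow> (\<forall>(a, b)\<in>A. \<exists>i\<in>I. a \<in> S i \<and> b \<in> S i)"

definition gB :: "('v \<times> 'v) set \<Rightarrow> nat set \<Rightarrow> (nat \<Rightarrow> 'v set) \<Rightarrow> nat set set" where
  "gB A X S = {I. I \<subseteq> X \<and> covers A S I}"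

definition gd :: "('v \<times> 'v) set \<Rightarrow> nat set \<Rightarrow> (nat \<Rightarrow> 'v set) \<Rightarrow> (nat set \<Rightarrow> 'k::field) \<Rightarrow> nat set \<Rightarrow> 'k" where
  "gd A X S f J =
     (if J \<in> gB A X S then
        (\<Sum>i\<in>X - J.
           if insert i J \<in> gB A X S then wsign (insert i J) i * f (insert i J) else 0)
      else 0)"

definition gch :: "('v \<times> 'v) set \<Rightarrow> nat set \<Rightarrow> (nat \<Rightarrow> 'v set) \<Rightarrow> (nat set \<Rightarrow> 'k::field) set" where
  "gch A X S = {f. \<forall>J. J \<notin> gB A X S \<longrightarrow> f J = 0}"

definition gcrit :: "('v \<times> 'v) set \<Rightarrow> nat set \<Rightarrow> (nat \<Rightarrow> 'v set) \<Rightarrow> nat set set" where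
  "gcrit A X S = {I \<in> gB A X S.
     (\<forall>j\<in>I. I - {j} \<notin> gB A X S) \<and>
     (\<forall>j\<in>X. j \<notin> I \<longrightarrow>
        (\<exists>i<j. i \<in> insert j I \<and> insert j I - {i} \<in> gB A X S))}"

definition ganick :: "nat set \<Rightarrow> (nat \<Rightarrow> 'v set) \<Rightarrow> bool" where
  "ganick X S \<longleftrightarrow> (\<forall>i\<in>X. \<forall>j\<in>X. \<forall>k\<in>X. i < j \<and> j < k \<and> S i \<inter> S j \<noteq> {}
        \<longrightarrow> S i \<inter> S k \<subseteq> S j \<inter> S k)"

lemma covers_mono: "covers A S I \<Longrightarrow> I \<subseteq> K \<Longrightarrow> covers A S K"
  unfolding covers_def by blast

lemma gB_up: "J \<in> gB A X S \<Longrightarrow> J \<subseteq> K \<Longrightarrow> K \<subseteq> X \<Longrightarrow> K \<in> gB A X S"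
  unfolding gB_def using covers_mono by blast

lemma gd_in: "J \<in> gB A X S \<Longrightarrow>
   gd A X S f J = (\<Sum>i\<in>X - J. wsign (insert i J) i * f (insert i J))"
proof -
  assume J: "J \<in> gB A X S"
  have "i \<in> X - J \<Longrightarrow> insert i J \<in> gB A X S" for i
    using gB_up[OF J, of "insert i J"] J by (auto simp: gB_def)
  then show ?thesis unfolding gd_def using J by (auto intro!: sum.cong)
qed

lemma gd_out: "J \<notin> gB A X S \<Longrightarrow> gd A X S f J = 0"
  unfolding gd_def by simp

lemma gd_ch: "gd A X S f \<in> gch A X S"
  unfolding gch_def using gd_out by blast

lemma gd_add: fixes f g :: "nat set \<Rightarrow> 'k::field" shows "gd A X S (\<lambda>I. f I + g I) J = gd A X S f J + gd A X S g J"
proof -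
  have "(if P then w * (a + b) else 0) = (if P then w * a else 0) + (if P then (w::'k) * b else 0)" for P w a b
    by (simp add: distrib_left)
  then show ?thesis unfolding gd_def by (simp add: sum.distrib[symmetric])
qed

lemma gd_diff: fixes f g :: "nat set \<Rightarrow> 'k::field" shows "gd A X S (\<lambda>I. f I - g I) J = gd A X S f J - gd A X S g J"
proof -
  have "(if P then w * (a - b) else 0) = (if P then w * a else 0) - (if P then (w::'k) * b else 0)" for P w a b
    by (simp add: right_diff_distrib)
  then show ?thesis unfolding gd_def by (simp add: sum_subtractf[symmetric])
qed

lemma gd_scale: fixes f :: "nat set \<Rightarrow> 'k::field" shows "gd A X S (\<lambda>I. c * f I) J = c * gd A X S f J"
proof -
  have "(if P then w * (c * a) else 0) = c * (if P then (w::'k) * a else 0)" for P w a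
    by simp
  then show ?thesis unfolding gd_def by (simp add: sum_distrib_left)
qed

lemma gd_zero: "gd A X S (\<lambda>I. 0) J = 0"
  unfolding gd_def by (simp cong: if_cong)

lemma wsign_swap:
  assumes "finite J" "i < k" "i \<notin> J" "k \<notin> J"
  shows "(wsign (insert i J) i * wsign (insert k (insert i J)) k :: 'k::field)
       = - (wsign (insert k J) k * wsign (insert i (insert k J)) i)"
proof -
  have e1: "{m \<in> insert k (insert i J). m < k} = insert i {m \<in> J. m < k}" using assms by auto
  have e2: "{m \<in> insert i J. m < i} = {m \<in> J. m < i}" by auto
  have e3: "{m \<in> insert k J. m < k} = {m \<in> J. m < k}" by auto
  have e4: "{m \<in> insert i (insert k J). m < i} = {m \<in> J. m < i}" using assms by auto
  have c1: "card (insert i {m \<in> J. m < k}) = Suc (card {m \<in> J. m < k})"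
    using assms by simp
  show ?thesis unfolding wsign_def e1 e2 e3 e4 c1 by simp
qed

lemma antisym_sum_zero:
  fixes G :: "nat \<Rightarrow> nat \<Rightarrow> 'a::ab_group_add"
  assumes "finite Y" "\<And>i k. i \<in> Y \<Longrightarrow> k \<in> Y \<Longrightarrow> i < k \<Longrightarrow> G i k = - G k i"
  shows "(\<Sum>i\<in>Y. \<Sum>k\<in>Y - {i}. G i k) = 0"
proof -
  have split: "(\<Sum>k\<in>Y - {i}. G i k) = (\<Sum>k\<in>{k\<in>Y. k < i}. G i k) + (\<Sum>k\<in>{k\<in>Y. i < k}. G i k)" for i
  proof -
    have "Y - {i} = {k\<in>Y. k < i} \<union> {k\<in>Y. i < k}" by auto
    then show ?thesis using assms(1) by (simp add: sum.union_disjoint[symmetric] disjoint_iff)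
  qed
  have sw: "(\<Sum>i\<in>Y. \<Sum>k\<in>{k\<in>Y. i < k}. G i k) = (\<Sum>k\<in>Y. \<Sum>i\<in>{i\<in>Y. i < k}. G i k)"
    by (rule sum.swap_restrict[OF assms(1) assms(1)])
  have neg: "(\<Sum>k\<in>Y. \<Sum>i\<in>{i\<in>Y. i < k}. G i k) = - (\<Sum>k\<in>Y. \<Sum>i\<in>{i\<in>Y. i < k}. G k i)"
    by (simp add: sum_negf[symmetric] assms(2))
  show ?thesis unfolding split sum.distrib sw neg by simp
qed

lemma gd_gd:
  fixes f :: "nat set \<Rightarrow> 'k::field"
  assumes "finite X"
  shows "gd A X S (gd A X S f) J = 0"
proof (cases "J \<in> gB A X S")
  case False then show ?thesis by (simp add: gd_out)
next
  case True
  have JX: "J \<subseteq> X" using True by (auto simp: gB_def)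
  have fJ: "finite J" using JX assms finite_subset by blast
  have ins: "i \<in> X - J \<Longrightarrow> insert i J \<in> gB A X S" for i using gB_up[OF True] JX by auto
  define G where "G i k = wsign (insert i J) i * (wsign (insert k (insert i J)) k * f (insert k (insert i J)))" for i k
  have "gd A X S (gd A X S f) J = (\<Sum>i\<in>X - J. \<Sum>k\<in>(X - J) - {i}. G i k)"
    unfolding gd_in[OF True]
    apply (rule sum.cong, simp)
    apply (subst gd_in[OF ins], assumption)
    apply (simp add: sum_distrib_left G_def)
    apply (rule sum.cong, auto)
    done
  also have "\<dots> = 0"
  proof (rule antisym_sum_zero)
    show "finite (X - J)" using assms by simp
    fix i k assume "i \<in> X - J" "k \<in> X - J" "i < k"
    then have ik: "i \<notin> J" "k \<notin> J" "i \<noteq> k" by auto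
    have e: "insert k (insert i J) = insert i (insert k J)" by auto
    have h: "(wsign (insert i J) i * wsign (insert k (insert i J)) k :: 'k)
       = - (wsign (insert k J) k * wsign (insert i (insert k J)) i)"
      by (rule wsign_swap[OF fJ \<open>i<k\<close> ik(1,2)])
    show "G i k = - G k i" unfolding G_def
      by (simp only: mult.assoc[symmetric] h) (simp add: e)
  qed
  finally show ?thesis .
qed



definition inS :: "(nat \<Rightarrow> 'v set) \<Rightarrow> nat \<Rightarrow> 'v \<times> 'v \<Rightarrow> bool" where
  "inS S i e \<longleftrightarrow> fst e \<in> S i \<and> snd e \<in> S i"

lemma covers_alt: "covers A S I \<longleftrightarrow> (\<forall>e\<in>A. \<exists>i\<in>I. inS S i e)"
  unfolding covers_def inS_def by (auto simp: case_prod_unfold)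

locale step =
  fixes A :: "('v \<times> 'v) set" and X :: "nat set" and S :: "nat \<Rightarrow> 'v set"
  assumes finX: "finite X" and neX: "X \<noteq> {}" and an: "ganick X S"
begin

definition x0 where "x0 = Min X"
definition A0 where "A0 = {e\<in>A. inS S x0 e}"
definition A1 where "A1 = {e\<in>A. \<not> inS S x0 e}"
definition K where "K e = {k\<in>X - {x0}. inS S k e}"
definition es where "es = (SOME e. e \<in> A0 \<and> (\<forall>e'\<in>A0. K e \<subseteq> K e'))"
definition R where "R = K es"
definition X1 where "X1 = X - {x0} - R"

lemma x0X: "x0 \<in> X" unfolding x0_def using finX neX by simp
lemma x0min: "k \<in> X \<Longrightarrow> x0 \<le> k" unfolding x0_def using finX by simp

lemma K_chain:
  assumes "inS S x0 e1" "inS S x0 e2"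
  shows "K e1 \<subseteq> K e2 \<or> K e2 \<subseteq> K e1"
proof (rule ccontr)
  assume "\<not> ?thesis"
  then obtain k1 k2 where k1: "k1 \<in> K e1" "k1 \<notin> K e2" and k2: "k2 \<in> K e2" "k2 \<notin> K e1" by blast
  have gen: "False" if a: "ka \<in> K ea" "ka \<notin> K eb" "kb \<in> K eb" "kb \<notin> K ea" "ka < kb"
      "inS S x0 ea" "inS S x0 eb" for ka kb ea eb
  proof -
    have kaX: "ka \<in> X" "ka \<noteq> x0" and kbX: "kb \<in> X" using a unfolding K_def by auto
    have lt: "x0 < ka" using x0min[OF kaX(1)] kaX(2) by simp
    have ne: "S x0 \<inter> S ka \<noteq> {}" using a(1,6) unfolding K_def inS_def by auto
    have sub: "S x0 \<inter> S kb \<subseteq> S ka \<inter> S kb"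
      using an[unfolded ganick_def, rule_format, OF x0X kaX(1) kbX] lt a(5) ne by simp
    have "inS S ka eb" using sub a(3,7) unfolding K_def inS_def by auto
    then show False using a(2) kaX unfolding K_def by auto
  qed
  have "k1 \<noteq> k2" using k1 k2 by auto
  then show False
    using gen[OF k1 k2 _ assms] gen[OF k2 k1 _ assms(2,1)] by (cases "k1 < k2") auto
qed

lemma K_fin: "finite (K e)" unfolding K_def using finX by simp

lemma es_prop:
  assumes "A0 \<noteq> {}"
  shows "es \<in> A0" "\<And>e. e \<in> A0 \<Longrightarrow> R \<subseteq> K e"
proof -
  obtain e0 where e0: "e0 \<in> A0" using assms by auto
  obtain m where m: "m \<in> A0" "\<And>y. y \<in> A0 \<Longrightarrow> card (K m) \<le> card (K y)"
    using ex_has_least_nat[of "\<lambda>e. e \<in> A0", OF e0, of "\<lambda>e. card (K e)"] by metis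
  have mm: "\<forall>e'\<in>A0. K m \<subseteq> K e'"
  proof
    fix e' assume e': "e' \<in> A0"
    have i1: "inS S x0 m" using m(1) unfolding A0_def by simp
    have i2: "inS S x0 e'" using e' unfolding A0_def by simp
    from K_chain[OF i1 i2] show "K m \<subseteq> K e'"
    proof
      assume s: "K e' \<subseteq> K m"
      have "card (K m) \<le> card (K e')" using m(2)[OF e'] .
      then have "K e' = K m" using card_subset_eq[OF K_fin s] card_mono[OF K_fin s] by linarith
      then show ?thesis by simp
    qed
  qed
  have "es \<in> A0 \<and> (\<forall>e'\<in>A0. K es \<subseteq> K e')"
    unfolding es_def by (rule someI[where x=m]) (use m(1) mm in simp)
  then show "es \<in> A0" "\<And>e. e \<in> A0 \<Longrightarrow> R \<subseteq> K e" unfolding R_def by auto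
qed

lemma cov_ins: "covers A S (insert x0 J) \<longleftrightarrow> covers A1 S J"
  unfolding covers_alt A1_def by auto

lemma cov_R:
  assumes "A0 \<noteq> {}" "J \<subseteq> X - {x0}"
  shows "covers A S J \<longleftrightarrow> covers A1 S J \<and> J \<inter> R \<noteq> {}"
proof
  assume c: "covers A S J"
  then have "covers A1 S J" unfolding covers_alt A1_def by auto
  moreover have "es \<in> A" using es_prop(1)[OF assms(1)] unfolding A0_def by auto
  then obtain i where "i \<in> J" "inS S i es" using c unfolding covers_alt by auto
  then have "i \<in> J \<inter> R" using assms(2) unfolding R_def K_def by auto
  ultimately show "covers A1 S J \<and> J \<inter> R \<noteq> {}" by auto
next
  assume c: "covers A1 S J \<and> J \<inter> R \<noteq> {}"
  then obtain i where i: "i \<in> J" "i \<in> R" by auto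
  show "covers A S J" unfolding covers_alt
  proof
    fix e assume e: "e \<in> A"
    show "\<exists>i\<in>J. inS S i e"
    proof (cases "inS S x0 e")
      case True
      then have "e \<in> A0" using e unfolding A0_def by auto
      then have "i \<in> K e" using es_prop(2)[OF assms(1) \<open>e \<in> A0\<close>] i(2) by blast
      then show ?thesis using i unfolding K_def by auto
    next
      case False
      then show ?thesis using c e unfolding covers_alt A1_def by blast
    qed
  qed
qed

lemma R_sub: "R \<subseteq> X - {x0}" unfolding R_def K_def by auto
lemma X1_sub: "X1 \<subseteq> X - {x0}" unfolding X1_def by auto

lemma gB1_iff:
  assumes "A0 \<noteq> {}" "J \<subseteq> X - {x0}"
  shows "J \<in> gB A1 X1 S \<longleftrightarrow> covers A1 S J \<and> \<not> covers A S J"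
  using cov_R[OF assms] assms(2) unfolding gB_def X1_def by auto

lemma gB_ins: "J \<subseteq> X \<Longrightarrow> insert x0 J \<in> gB A X S \<longleftrightarrow> covers A1 S J"
  using x0X cov_ins unfolding gB_def by auto

lemma crit_empty:
  assumes "A0 = {}"
  shows "gcrit A X S = {}"
proof -
  { fix I assume I: "I \<in> gcrit A X S"
    have IB: "I \<in> gB A X S" using I unfolding gcrit_def by auto
    have "x0 \<in> I"
    proof (rule ccontr)
      assume "x0 \<notin> I"
      then obtain i where "i < x0" "i \<in> insert x0 I" "insert x0 I - {i} \<in> gB A X S"
        using I x0X unfolding gcrit_def by blast
      moreover have "insert x0 I \<subseteq> X" using IB x0X unfolding gB_def by auto
      ultimately have "i \<in> X" "i < x0" by auto
      then show False using x0min[of i] by simp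
    qed
    moreover have "covers A S (I - {x0})"
      unfolding covers_alt
    proof
      fix e assume e: "e \<in> A"
      then obtain i where "i \<in> I" "inS S i e" using IB unfolding gB_def covers_alt by blast
      moreover have "\<not> inS S x0 e" using e assms unfolding A0_def by blast
      ultimately show "\<exists>i\<in>I - {x0}. inS S i e" by blast
    qed
    then have "I - {x0} \<in> gB A X S" using IB unfolding gB_def by auto
    ultimately have False using I unfolding gcrit_def by auto }
  then show ?thesis by auto
qed

lemma crit_step:
  assumes "A0 \<noteq> {}"
  shows "gcrit A X S = insert x0 ` gcrit A1 X1 S"
proof (intro equalityI subsetI)
  fix I assume I: "I \<in> gcrit A X S"
  have IB: "I \<in> gB A X S" using I unfolding gcrit_def by auto
  have IX: "I \<subseteq> X" using IB unfolding gB_def by auto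
  have x0I: "x0 \<in> I"
  proof (rule ccontr)
    assume "x0 \<notin> I"
    then obtain i where "i < x0" "i \<in> insert x0 I" "insert x0 I - {i} \<in> gB A X S"
      using I x0X unfolding gcrit_def by blast
    then have "i \<in> X" "i < x0" using IX by auto
    then show False using x0min[of i] by simp
  qed
  define J where "J = I - {x0}"
  have IJ: "I = insert x0 J" "x0 \<notin> J" using x0I J_def by auto
  have JX: "J \<subseteq> X - {x0}" using IX J_def by auto
  have cA1: "covers A1 S J" using IB IJ cov_ins unfolding gB_def by auto
  have ncA: "\<not> covers A S J" using I x0I IX unfolding gcrit_def gB_def J_def by auto
  have JB: "J \<in> gB A1 X1 S" using gB1_iff[OF assms JX] cA1 ncA by simp
  have JR: "J \<inter> R = {}" using cov_R[OF assms JX] cA1 ncA by auto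
  have "J \<in> gcrit A1 X1 S"
    unfolding gcrit_def
  proof (intro CollectI conjI ballI impI)
    show "J \<in> gB A1 X1 S" by fact
    fix j assume j: "j \<in> J"
    have "I - {j} \<notin> gB A X S" using I j IJ unfolding gcrit_def by auto
    moreover have "I - {j} = insert x0 (J - {j})" using IJ j by auto
    moreover have "J - {j} \<subseteq> X" using JX by auto
    ultimately have "\<not> covers A1 S (J - {j})" using gB_ins by auto
    then show "J - {j} \<notin> gB A1 X1 S" unfolding gB_def by auto
  next
    fix j assume j: "j \<in> X1" "j \<notin> J"
    have jX: "j \<in> X" "j \<noteq> x0" "j \<notin> R" using j X1_sub unfolding X1_def by auto
    then have "j \<notin> I" using IJ j by auto
    then obtain i where i: "i < j" "i \<in> insert j I" "insert j I - {i} \<in> gB A X S"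
      using I jX unfolding gcrit_def by blast
    have "i \<noteq> x0"
    proof
      assume "i = x0"
      then have "insert j I - {i} = insert j J" using IJ jX by auto
      then have "covers A S (insert j J)" using i unfolding gB_def by auto
      moreover have "insert j J \<subseteq> X - {x0}" using JX jX by auto
      ultimately have "insert j J \<inter> R \<noteq> {}" using cov_R[OF assms] by blast
      then show False using JR jX by auto
    qed
    then have e: "insert j I - {i} = insert x0 (insert j J - {i})" using IJ by auto
    have "covers A1 S (insert j J - {i})"
      using i(3) unfolding e using gB_ins[of "insert j J - {i}"] JX jX by auto
    moreover have "insert j J - {i} \<subseteq> X1" using JB j unfolding gB_def by auto
    ultimately show "\<exists>i<j. i \<in> insert j J \<and> insert j J - {i} \<in> gB A1 X1 S"
      using i \<open>i \<noteq> x0\<close> IJ unfolding gB_def by auto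
  qed
  then show "I \<in> insert x0 ` gcrit A1 X1 S" using IJ by auto
next
  fix I assume "I \<in> insert x0 ` gcrit A1 X1 S"
  then obtain J where J: "J \<in> gcrit A1 X1 S" and IJ: "I = insert x0 J" by auto
  have JB: "J \<in> gB A1 X1 S" using J unfolding gcrit_def by auto
  have JX1: "J \<subseteq> X1" using JB unfolding gB_def by auto
  have JX: "J \<subseteq> X - {x0}" using JX1 X1_sub by auto
  have cA1: "covers A1 S J" and ncA: "\<not> covers A S J" using gB1_iff[OF assms JX] JB by auto
  have IB: "I \<in> gB A X S" using gB_ins[of J] JX cA1 IJ by auto
  show "I \<in> gcrit A X S"
    unfolding gcrit_def
  proof (intro CollectI conjI ballI impI)
    show "I \<in> gB A X S" by fact
    fix j assume j: "j \<in> I"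
    show "I - {j} \<notin> gB A X S"
    proof (cases "j = x0")
      case True
      then have "I - {j} = J" using IJ JX by auto
      then show ?thesis using ncA unfolding gB_def by auto
    next
      case False
      then have jJ: "j \<in> J" using j IJ by auto
      have "J - {j} \<notin> gB A1 X1 S" using J jJ unfolding gcrit_def by auto
      then have "\<not> covers A1 S (J - {j})" using JX1 unfolding gB_def by auto
      moreover have "I - {j} = insert x0 (J - {j})" using IJ False by auto
      ultimately show ?thesis using gB_ins[of "J - {j}"] JX by auto
    qed
  next
    fix j assume j: "j \<in> X" "j \<notin> I"
    have jx: "j \<noteq> x0" "j \<notin> J" using j IJ by auto
    show "\<exists>i<j. i \<in> insert j I \<and> insert j I - {i} \<in> gB A X S"
    proof (cases "j \<in> R")
      case True
      have lt: "x0 < j" using x0min[OF j(1)] jx by simp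
      have e: "insert j I - {x0} = insert j J" using IJ JX jx by auto
      have "covers A1 S (insert j J)" using cA1 covers_mono by blast
      moreover have "insert j J \<inter> R \<noteq> {}" using True by auto
      moreover have ijX: "insert j J \<subseteq> X - {x0}" using JX j jx by auto
      ultimately have "covers A S (insert j J)" using cov_R[OF assms ijX] by auto
      then have "insert j I - {x0} \<in> gB A X S" unfolding e gB_def using ijX by auto
      then show ?thesis using lt IJ by auto
    next
      case False
      then have jX1: "j \<in> X1" using j jx unfolding X1_def by auto
      then obtain i where i: "i < j" "i \<in> insert j J" "insert j J - {i} \<in> gB A1 X1 S"
        using J jx unfolding gcrit_def by blast
      have ix: "i \<noteq> x0" using i JX jx by auto
      have e: "insert j I - {i} = insert x0 (insert j J - {i})" using IJ ix by auto
      have "covers A1 S (insert j J - {i})" using i(3) unfolding gB_def by auto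
      moreover have "insert j J - {i} \<subseteq> X" using JX j by auto
      ultimately have "insert j I - {i} \<in> gB A X S" unfolding e using gB_ins by auto
      then show ?thesis using i IJ by auto
    qed
  qed
qed

end


lemma wsign_min:
  assumes "\<And>m. m \<in> J \<Longrightarrow> x \<le> m"
  shows "wsign (insert x J) x = (1::'k::field)"
proof -
  have "{m \<in> insert x J. m < x} = {}" using assms by force
  then show ?thesis unfolding wsign_def by (metis card.empty power_0)
qed

lemma wsign_shift:
  assumes "finite J" "x < i" "x \<notin> J"
  shows "wsign (insert i (insert x J)) i = - (wsign (insert i J) i :: 'k::field)"
proof -
  have "{m \<in> insert i (insert x J). m < i} = insert x {m \<in> insert i J. m < i}" using assms by auto
  moreover have "card (insert x {m \<in> insert i J. m < i}) = Suc (card {m \<in> insert i J. m < i})"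
    using assms by simp
  ultimately show ?thesis unfolding wsign_def by simp
qed

context step begin

definition hop :: "(nat set \<Rightarrow> 'k::field) \<Rightarrow> nat set \<Rightarrow> 'k" where
  "hop f I = (if x0 \<in> I \<and> I - {x0} \<in> gB A X S then f (I - {x0}) else 0)"
definition Psi :: "(nat set \<Rightarrow> 'k::field) \<Rightarrow> nat set \<Rightarrow> 'k" where
  "Psi f I = (if x0 \<in> I then f (I - {x0}) else 0)"
definition Phi :: "(nat set \<Rightarrow> 'k::field) \<Rightarrow> nat set \<Rightarrow> 'k" where
  "Phi g J = (if x0 \<notin> J then g (insert x0 J) else 0)"
definition E where "E = {I \<in> gB A X S. x0 \<in> I \<and> I - {x0} \<notin> gB A X S}"

lemma gB_sub: "I \<in> gB A' Y S \<Longrightarrow> I \<subseteq> Y" unfolding gB_def by auto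

lemma ins_gB: "J \<in> gB A X S \<Longrightarrow> insert x0 J \<in> gB A X S"
  using gB_up[of J A X S "insert x0 J"] x0X gB_sub by auto

lemma E_gB: "I \<in> E \<Longrightarrow> I \<in> gB A X S" unfolding E_def by auto

lemma hop_ch: "hop f \<in> gch A X S"
proof -
  { fix I assume "I \<notin> gB A X S"
    moreover have "x0 \<in> I \<Longrightarrow> I = insert x0 (I - {x0})" by auto
    ultimately have "hop f I = 0" unfolding hop_def using ins_gB by metis }
  then show ?thesis unfolding gch_def by auto
qed

lemma H2:
  fixes f :: "nat set \<Rightarrow> 'k::field"
  assumes f: "f \<in> gch A X S" and I: "I \<notin> E"
  shows "f I = gd A X S (hop f) I + hop (gd A X S f) I"
proof (cases "I \<in> gB A X S")
  case False
  then have "f I = 0" using f unfolding gch_def by auto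
  moreover have "hop (gd A X S f) I = 0"
  proof -
    have "x0 \<in> I \<Longrightarrow> I = insert x0 (I - {x0})" by auto
    then show ?thesis unfolding hop_def using ins_gB False by metis
  qed
  ultimately show ?thesis using False gd_out by simp
next
  case True
  have IX: "I \<subseteq> X" using True gB_sub by auto
  have fI: "finite I" using IX finX finite_subset by blast
  show ?thesis
  proof (cases "x0 \<in> I")
    case False
    have h0: "hop (gd A X S f) I = 0" unfolding hop_def using False by simp
    have x0XI: "x0 \<in> X - I" using x0X False by simp
    have "gd A X S (hop f) I = (\<Sum>i\<in>X - I. wsign (insert i I) i * hop f (insert i I))"
      by (rule gd_in[OF True])
    also have "\<dots> = wsign (insert x0 I) x0 * hop f (insert x0 I)
        + (\<Sum>i\<in>X - I - {x0}. wsign (insert i I) i * hop f (insert i I))"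
      using finX x0XI by (simp add: sum.remove)
    also have "(\<Sum>i\<in>X - I - {x0}. wsign (insert i I) i * hop f (insert i I)) = 0"
      by (rule sum.neutral) (use False in \<open>auto simp: hop_def\<close>)
    also have "wsign (insert x0 I) x0 = (1::'k)"
      by (rule wsign_min) (use IX x0min in auto)
    also have "hop f (insert x0 I) = f I" unfolding hop_def using True False
      by (simp add: insert_Diff_if)
    finally show ?thesis using h0 by simp
  next
    case x0I: True
    define J where "J = I - {x0}"
    have JB: "J \<in> gB A X S" using I True x0I unfolding E_def J_def by auto
    have IJ: "I = insert x0 J" "x0 \<notin> J" using x0I J_def by auto
    have fJ: "finite J" using fI J_def by auto
    have XJ: "X - J = insert x0 (X - I)" using IJ x0X by auto
    have h1: "hop (gd A X S f) I = (\<Sum>i\<in>X - J. wsign (insert i J) i * f (insert i J))"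
      unfolding hop_def using x0I JB gd_in[OF JB] by (simp add: J_def)
    also have "\<dots> = wsign (insert x0 J) x0 * f (insert x0 J) +
        (\<Sum>i\<in>X - I. wsign (insert i J) i * f (insert i J))"
      unfolding XJ using finX IJ by (subst sum.insert) auto
    also have "wsign (insert x0 J) x0 = (1::'k)"
      by (rule wsign_min) (use IX IJ x0min in auto)
    finally have h1': "hop (gd A X S f) I = f I + (\<Sum>i\<in>X - I. wsign (insert i J) i * f (insert i J))"
      using IJ by simp
    have "gd A X S (hop f) I = (\<Sum>i\<in>X - I. wsign (insert i I) i * hop f (insert i I))"
      by (rule gd_in[OF True])
    also have "\<dots> = (\<Sum>i\<in>X - I. - (wsign (insert i J) i * f (insert i J)))"
    proof (rule sum.cong, simp)
      fix i assume i: "i \<in> X - I"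
      have ix: "x0 < i" using i x0min IJ by (metis DiffE insertI1 order_le_less)
      have "insert i J \<in> gB A X S" using gB_up[OF JB] i gB_sub[OF JB] by auto
      moreover have "insert i I - {x0} = insert i J" using IJ ix by auto
      ultimately have "hop f (insert i I) = f (insert i J)" unfolding hop_def using x0I by simp
      moreover have "wsign (insert i I) i = - (wsign (insert i J) i :: 'k)"
        unfolding IJ by (rule wsign_shift[OF fJ ix IJ(2)])
      ultimately show "wsign (insert i I) i * hop f (insert i I) = - (wsign (insert i J) i * f (insert i J))"
        by simp
    qed
    also have "\<dots> = - (\<Sum>i\<in>X - I. wsign (insert i J) i * f (insert i J))"
      by (simp add: sum_negf)
    finally show ?thesis using h1' by simp
  qed
qed

lemma H3:
  assumes "\<And>I. I \<notin> E \<Longrightarrow> u I = 0"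
  shows "hop u I = 0"
proof -
  have "I - {x0} \<notin> E" unfolding E_def by auto
  then show ?thesis unfolding hop_def using assms by auto
qed

lemma E0:
  assumes "A0 = {}"
  shows "I \<notin> E"
proof
  assume I: "I \<in> E"
  then have IB: "I \<in> gB A X S" unfolding E_def by auto
  have "covers A S (I - {x0})"
    unfolding covers_alt
  proof
    fix e assume e: "e \<in> A"
    then obtain i where "i \<in> I" "inS S i e" using IB unfolding gB_def covers_alt by blast
    moreover have "\<not> inS S x0 e" using e assms unfolding A0_def by blast
    ultimately show "\<exists>i\<in>I - {x0}. inS S i e" by blast
  qed
  then have "I - {x0} \<in> gB A X S" using IB unfolding gB_def by auto
  then show False using I unfolding E_def by auto
qed

context
  assumes A0ne: "A0 \<noteq> {}"
begin

lemma X1x0: "x0 \<notin> X1" using X1_sub by auto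

lemma P2:
  assumes f: "f \<in> gch A1 X1 S" and I: "I \<notin> E"
  shows "Psi f I = 0"
proof (cases "x0 \<in> I")
  case False then show ?thesis unfolding Psi_def by simp
next
  case True
  show ?thesis
  proof (rule ccontr)
    assume "Psi f I \<noteq> 0"
    then have ne: "f (I - {x0}) \<noteq> 0" using True unfolding Psi_def by simp
    then have B1: "I - {x0} \<in> gB A1 X1 S" using f unfolding gch_def by auto
    have sub: "I - {x0} \<subseteq> X - {x0}" using gB_sub[OF B1] X1_sub by auto
    have c: "covers A1 S (I - {x0})" "\<not> covers A S (I - {x0})" using gB1_iff[OF A0ne sub] B1 by auto
    have sX: "I - {x0} \<subseteq> X" using sub by auto
    have "insert x0 (I - {x0}) \<in> gB A X S" using gB_ins[OF sX] c by simp
    then have "I \<in> gB A X S" using True by (simp add: insert_absorb)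
    moreover have "I - {x0} \<notin> gB A X S" using c unfolding gB_def by auto
    ultimately show False using I True unfolding E_def by auto
  qed
qed

lemma P2ch:
  assumes f: "f \<in> gch A1 X1 S" shows "Psi f \<in> gch A X S"
  unfolding gch_def
proof (intro CollectI allI impI)
  fix J assume "J \<notin> gB A X S"
  then have "J \<notin> E" using E_gB by blast
  then show "Psi f J = 0" using P2[OF f] by blast
qed

lemma P3:
  assumes u: "\<And>I. I \<notin> E \<Longrightarrow> u I = 0"
  shows "Phi u \<in> gch A1 X1 S" "Psi (Phi u) = u"
proof -
  { fix J assume J: "J \<notin> gB A1 X1 S"
    have "Phi u J = 0"
    proof (cases "x0 \<in> J")
      case True then show ?thesis unfolding Phi_def by simp
    next
      case False
      have "insert x0 J \<notin> E"
      proof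
        assume "insert x0 J \<in> E"
        then have a: "insert x0 J \<in> gB A X S" "insert x0 J - {x0} \<notin> gB A X S" unfolding E_def by auto
        have JX: "J \<subseteq> X - {x0}" using gB_sub[OF a(1)] False by auto
        have "covers A1 S J" using a(1) gB_ins[of J] JX by auto
        moreover have "\<not> covers A S J" using a(2) JX False unfolding gB_def by auto
        ultimately have "J \<in> gB A1 X1 S" using gB1_iff[OF A0ne JX] by simp
        then show False using J by simp
      qed
      then show ?thesis unfolding Phi_def using u False by simp
    qed }
  then show "Phi u \<in> gch A1 X1 S" unfolding gch_def by auto
  show "Psi (Phi u) = u"
  proof
    fix I show "Psi (Phi u) I = u I"
    proof (cases "x0 \<in> I")
      case True then show ?thesis unfolding Psi_def Phi_def by (simp add: insert_absorb)
    next
      case False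
      then have "I \<notin> E" unfolding E_def by auto
      then show ?thesis unfolding Psi_def using False u by simp
    qed
  qed
qed

lemma P4:
  assumes f: "f \<in> gch A1 X1 S" and z: "\<And>I. Psi f I = 0"
  shows "f J = 0"
proof (cases "J \<in> gB A1 X1 S")
  case True
  then have "x0 \<notin> J" using gB_sub X1x0 by blast
  then have "Psi f (insert x0 J) = f J" unfolding Psi_def by simp
  then show ?thesis using z by simp
next
  case False then show ?thesis using f unfolding gch_def by auto
qed

lemma P1:
  fixes f :: "nat set \<Rightarrow> 'k::field"
  assumes f: "f \<in> gch A1 X1 S"
  shows "gd A X S (Psi f) I = - Psi (gd A1 X1 S f) I"
proof (cases "I \<in> gB A X S")
  case False
  have "Psi (gd A1 X1 S f) I = 0"
  proof (cases "x0 \<in> I")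
    case True
    have "I - {x0} \<notin> gB A1 X1 S"
    proof
      assume B1: "I - {x0} \<in> gB A1 X1 S"
      have sub: "I - {x0} \<subseteq> X" using gB_sub[OF B1] X1_sub by auto
      have "covers A1 S (I - {x0})" using B1 unfolding gB_def by auto
      then have "insert x0 (I - {x0}) \<in> gB A X S" using gB_ins[OF sub] by simp
      then show False using False True by (simp add: insert_absorb)
    qed
    then show ?thesis unfolding Psi_def using gd_out True by simp
  next
    case False then show ?thesis unfolding Psi_def by simp
  qed
  then show ?thesis using False gd_out by simp
next
  case True
  have IX: "I \<subseteq> X" using gB_sub[OF True] .
  show ?thesis
  proof (cases "x0 \<in> I")
    case False
    have "gd A X S (Psi f) I = (\<Sum>i\<in>X - I. wsign (insert i I) i * Psi f (insert i I))"
      by (rule gd_in[OF True])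
    also have "\<dots> = 0"
    proof (rule sum.neutral, rule ballI)
      fix i assume i: "i \<in> X - I"
      have "Psi f (insert i I) = 0"
      proof (cases "i = x0")
        case True
        have "I \<notin> gB A1 X1 S"
        proof
          assume B1: "I \<in> gB A1 X1 S"
          have sub: "I \<subseteq> X - {x0}" using gB_sub[OF B1] X1_sub by auto
          then have "\<not> covers A S I" using gB1_iff[OF A0ne sub] B1 by simp
          then show False using \<open>I \<in> gB A X S\<close> unfolding gB_def by auto
        qed
        then have "f I = 0" using f unfolding gch_def by auto
        then show ?thesis unfolding Psi_def using True False by simp
      next
        case ne: False
        then show ?thesis unfolding Psi_def using False by simp
      qed
      then show "wsign (insert i I) i * Psi f (insert i I) = 0" by simp
    qed
    finally show ?thesis unfolding Psi_def using False by simp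
  next
    case x0I: True
    define J where "J = I - {x0}"
    have IJ: "I = insert x0 J" "x0 \<notin> J" using x0I J_def by auto
    have JX: "J \<subseteq> X - {x0}" using IX IJ by auto
    have fJ: "finite J" using JX finX finite_subset by blast
    have cJ: "covers A1 S J" using True IJ gB_ins[of J] JX by auto
    have rhs: "Psi (gd A1 X1 S f) I = gd A1 X1 S f J" unfolding Psi_def J_def using x0I by simp
    have lhs: "gd A X S (Psi f) I = (\<Sum>i\<in>X - I. wsign (insert i I) i * f (insert i J))"
      unfolding gd_in[OF True]
    proof (rule sum.cong, simp)
      fix i assume "i \<in> X - I"
      then have "insert i I - {x0} = insert i J" using IJ by auto
      then show "wsign (insert i I) i * Psi f (insert i I) = wsign (insert i I) i * f (insert i J)"
        unfolding Psi_def using x0I by simp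
    qed
    show ?thesis
    proof (cases "J \<in> gB A1 X1 S")
      case False
      have "\<not> J \<subseteq> X1" using False cJ unfolding gB_def by auto
      then have "\<And>i. insert i J \<notin> gB A1 X1 S" using gB_sub by blast
      then have "\<And>i. f (insert i J) = 0" using f unfolding gch_def by auto
      then show ?thesis unfolding lhs rhs using gd_out[OF False] by simp
    next
      case JB: True
      have JX1: "J \<subseteq> X1" using gB_sub[OF JB] .
      have "gd A X S (Psi f) I = (\<Sum>i\<in>X1 - J. wsign (insert i I) i * f (insert i J))"
        unfolding lhs
      proof (rule sum.mono_neutral_right)
        show "finite (X - I)" using finX by simp
        show "X1 - J \<subseteq> X - I" using X1_sub IJ by auto
        show "\<forall>i\<in>X - I - (X1 - J). wsign (insert i I) i * f (insert i J) = 0"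
        proof
          fix i assume "i \<in> X - I - (X1 - J)"
          then have "i \<notin> X1" using IJ by auto
          then have "insert i J \<notin> gB A1 X1 S" using gB_sub by blast
          then show "wsign (insert i I) i * f (insert i J) = 0" using f unfolding gch_def by auto
        qed
      qed
      also have "\<dots> = (\<Sum>i\<in>X1 - J. - (wsign (insert i J) i * f (insert i J)))"
      proof (rule sum.cong, simp)
        fix i assume i: "i \<in> X1 - J"
        have ix: "x0 < i" using i X1_sub x0min by (metis DiffE insertI1 order_le_less subsetD)
        have "wsign (insert i I) i = - (wsign (insert i J) i :: 'k)"
          unfolding IJ by (rule wsign_shift[OF fJ ix IJ(2)])
        then show "wsign (insert i I) i * f (insert i J) = - (wsign (insert i J) i * f (insert i J))" by simp
      qed
      also have "\<dots> = - gd A1 X1 S f J" unfolding gd_in[OF JB] by (simp add: sum_negf)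
      finally show ?thesis using rhs by simp
    qed
  qed
qed

end

end


definition gker :: "('v \<times> 'v) set \<Rightarrow> nat set \<Rightarrow> (nat \<Rightarrow> 'v set) \<Rightarrow> (nat set \<Rightarrow> 'k::field) set" where
  "gker A X S = {f \<in> gch A X S. gd A X S f = (\<lambda>_. 0)}"
definition gim :: "('v \<times> 'v) set \<Rightarrow> nat set \<Rightarrow> (nat \<Rightarrow> 'v set) \<Rightarrow> (nat set \<Rightarrow> 'k::field) set" where
  "gim A X S = gd A X S ` gch A X S"

definition Good :: "('v \<times> 'v) set \<Rightarrow> nat set \<Rightarrow> (nat \<Rightarrow> 'v set) \<Rightarrow> 'k::field itself \<Rightarrow> bool" where
  "Good A X S t \<longleftrightarrow>
    (gcrit A X S = {} \<and> (gker A X S :: (nat set \<Rightarrow> 'k) set) \<subseteq> gim A X S) \<or>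
    (\<exists>I0 (z :: nat set \<Rightarrow> 'k). gcrit A X S = {I0} \<and> z \<in> gker A X S \<and> z \<notin> gim A X S \<and>
        gker A X S \<subseteq> {(\<lambda>I. w I + c * z I) | w c. w \<in> gim A X S})"

lemma in_span1: "f = (\<lambda>I. w I + c * z I) \<Longrightarrow> w \<in> W \<Longrightarrow> f \<in> {(\<lambda>I. w I + c * z I) | w c. w \<in> W}"
  by blast

lemma zero_ch: "(\<lambda>_. 0) \<in> gch A X S" unfolding gch_def by simp

lemma zero_im: "(\<lambda>_. 0) \<in> gim A X S"
proof -
  have "(\<lambda>_. 0) = gd A X S (\<lambda>_. 0)" by (rule ext) (simp only: gd_zero)
  then show ?thesis unfolding gim_def by (rule image_eqI[OF _ zero_ch])
qed

lemma ganick_sub: "ganick X S \<Longrightarrow> Y \<subseteq> X \<Longrightarrow> ganick Y S"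
  unfolding ganick_def by (meson subsetD)

lemma good_base: "Good A {} S TYPE('k::field)"
proof -
  have gd0: "gd A {} S f = (\<lambda>_. 0)" for f :: "nat set \<Rightarrow> 'k"
    unfolding gd_def by auto
  show ?thesis
  proof (cases "A = {}")
    case True
    have gB: "gB A {} S = {{}}" unfolding gB_def covers_def using True by auto
    have cr: "gcrit A {} S = {{}}" unfolding gcrit_def gB by auto
    define z :: "nat set \<Rightarrow> 'k" where "z I = (if I = {} then 1 else 0)" for I
    have zc: "z \<in> gch A {} S" unfolding gch_def gB z_def by auto
    have zk: "z \<in> gker A {} S" unfolding gker_def using zc gd0 by simp
    have zi: "z \<notin> gim A {} S"
    proof
      assume "z \<in> gim A {} S"
      then have "z = (\<lambda>_. 0)" unfolding gim_def using gd0 by auto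
      then have "z {} = 0" by simp
      then show False unfolding z_def by simp
    qed
    have "gker A {} S \<subseteq> {(\<lambda>I. w I + c * z I) | w c. w \<in> gim A {} S}"
    proof
      fix f :: "nat set \<Rightarrow> 'k" assume "f \<in> gker A {} S"
      then have f: "\<And>J. J \<noteq> {} \<Longrightarrow> f J = 0" unfolding gker_def gch_def gB by auto
      have "f = (\<lambda>I. 0 + f {} * z I)" unfolding z_def using f by auto
      then show "f \<in> {(\<lambda>I. w I + c * z I) | w c. w \<in> gim A {} S}" by (rule in_span1[OF _ zero_im])
    qed
    then show ?thesis unfolding Good_def using cr zk zi by blast
  next
    case False
    have gB: "gB A {} S = {}" unfolding gB_def covers_def using False by auto
    have cr: "gcrit A {} S = {}" unfolding gcrit_def gB by auto
    have "gker A {} S \<subseteq> (gim A {} S :: (nat set \<Rightarrow> 'k) set)"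
    proof
      fix f :: "nat set \<Rightarrow> 'k" assume "f \<in> gker A {} S"
      then have "f = (\<lambda>_. 0)" unfolding gker_def gch_def gB by auto
      then show "f \<in> gim A {} S" using zero_im by simp
    qed
    then show ?thesis unfolding Good_def using cr by blast
  qed
qed

context step begin

lemma ker_decomp:
  fixes f :: "nat set \<Rightarrow> 'k::field"
  assumes f: "f \<in> gker A X S"
  shows "\<And>I. I \<notin> E \<Longrightarrow> f I - gd A X S (hop f) I = 0"
    "gd A X S (\<lambda>I. f I - gd A X S (hop f) I) = (\<lambda>_. 0)"
proof -
  have fc: "f \<in> gch A X S" and df: "gd A X S f = (\<lambda>_. 0)" using f unfolding gker_def by auto
  fix I assume "I \<notin> E"
  from H2[OF fc this] show "f I - gd A X S (hop f) I = 0" unfolding df hop_def by simp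
next
  have df: "gd A X S f = (\<lambda>_. 0)" using f unfolding gker_def by auto
  show "gd A X S (\<lambda>I. f I - gd A X S (hop f) I) = (\<lambda>_. 0)"
    by (rule ext, subst gd_diff) (simp add: df gd_gd finX)
qed

lemma hop_diff_ch: "f \<in> gch A X S \<Longrightarrow> g \<in> gch A X S \<Longrightarrow> (\<lambda>I. f I - g I) \<in> gch A X S"
  unfolding gch_def by auto

lemma step_good:
  assumes IH: "A0 \<noteq> {} \<Longrightarrow> Good A1 X1 S TYPE('k::field)"
  shows "Good A X S TYPE('k)"
proof (cases "A0 = {}")
  case True
  have "gker A X S \<subseteq> (gim A X S :: (nat set \<Rightarrow> 'k) set)"
  proof
    fix f :: "nat set \<Rightarrow> 'k" assume f: "f \<in> gker A X S"
    note kd = ker_decomp[OF f]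
    have "f = gd A X S (hop f)"
    proof (rule ext)
      fix I
      have "f I - gd A X S (hop f) I = 0" using kd(1)[OF E0[OF True]] .
      then show "f I = gd A X S (hop f) I" by simp
    qed
    then show "f \<in> gim A X S" unfolding gim_def using hop_ch by blast
  qed
  then show ?thesis unfolding Good_def using crit_empty[OF True] by blast
next
  case A0ne: False
  have G1: "Good A1 X1 S TYPE('k)" using IH A0ne by simp
  have red: "\<exists>v. v \<in> gker A1 X1 S \<and> f = (\<lambda>I. gd A X S (hop f) I + Psi v I)"
    if f: "f \<in> gker A X S" for f :: "nat set \<Rightarrow> 'k"
  proof -
    define u where "u = (\<lambda>I. f I - gd A X S (hop f) I)"
    have kd1: "\<And>I. I \<notin> E \<Longrightarrow> u I = 0" using ker_decomp(1)[OF f] by (simp add: u_def)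
    have kd2: "gd A X S u = (\<lambda>_. 0)" using ker_decomp(2)[OF f] by (simp add: u_def)
    have kd3: "f = (\<lambda>I. gd A X S (hop f) I + u I)" by (simp add: u_def)
    define v where "v = Phi u"
    have vc: "v \<in> gch A1 X1 S" and uv: "Psi v = u" using P3[OF A0ne kd1] v_def by auto
    have "\<And>I. Psi (gd A1 X1 S v) I = 0"
    proof -
      fix I
      have "gd A X S (Psi v) I = - Psi (gd A1 X1 S v) I" by (rule P1[OF A0ne vc])
      moreover have "gd A X S u I = 0" using kd2 by simp
      ultimately show "Psi (gd A1 X1 S v) I = 0" using uv by simp
    qed
    then have "\<And>J. gd A1 X1 S v J = 0" using P4[OF A0ne gd_ch] by blast
    then have "v \<in> gker A1 X1 S" unfolding gker_def using vc by auto
    then show ?thesis using kd3 uv by auto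
  qed
  have Psi_bd: "Psi (gd A1 X1 S y) = (\<lambda>I. - gd A X S (Psi y) I)" if "y \<in> gch A1 X1 S" for y :: "nat set \<Rightarrow> 'k"
    using P1[OF A0ne that] by auto
  from G1[unfolded Good_def] show ?thesis
  proof
    assume a: "gcrit A1 X1 S = {} \<and> (gker A1 X1 S :: (nat set \<Rightarrow> 'k) set) \<subseteq> gim A1 X1 S"
    have "gker A X S \<subseteq> (gim A X S :: (nat set \<Rightarrow> 'k) set)"
    proof
      fix f :: "nat set \<Rightarrow> 'k" assume f: "f \<in> gker A X S"
      obtain v where v: "v \<in> gker A1 X1 S" "f = (\<lambda>I. gd A X S (hop f) I + Psi v I)" using red[OF f] by blast
      then obtain y where y: "y \<in> gch A1 X1 S" "v = gd A1 X1 S y" using a unfolding gim_def by blast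
      have "f = (\<lambda>I. gd A X S (hop f) I - gd A X S (Psi y) I)"
        using v(2) Psi_bd[OF y(1)] y(2) by simp
      also have "\<dots> = gd A X S (\<lambda>I. hop f I - Psi y I)" by (rule ext, rule gd_diff[symmetric])
      finally show "f \<in> gim A X S" unfolding gim_def
        using hop_diff_ch[OF hop_ch P2ch[OF A0ne y(1)]] by blast
    qed
    then show ?thesis unfolding Good_def using a crit_step[OF A0ne] by auto
  next
    assume "\<exists>I0 (z :: nat set \<Rightarrow> 'k). gcrit A1 X1 S = {I0} \<and> z \<in> gker A1 X1 S \<and> z \<notin> gim A1 X1 S \<and>
        gker A1 X1 S \<subseteq> {(\<lambda>I. w I + c * z I) | w c. w \<in> gim A1 X1 S}"
    then obtain I0 and z' :: "nat set \<Rightarrow> 'k" where a: "gcrit A1 X1 S = {I0}" "z' \<in> gker A1 X1 S"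
      "z' \<notin> gim A1 X1 S" "gker A1 X1 S \<subseteq> {(\<lambda>I. w I + c * z' I) | w c. w \<in> gim A1 X1 S}" by blast
    define z where "z = Psi z'"
    have z'c: "z' \<in> gch A1 X1 S" and dz': "gd A1 X1 S z' = (\<lambda>_. 0)" using a(2) unfolding gker_def by auto
    have zc: "z \<in> gch A X S" unfolding z_def using P2ch[OF A0ne z'c] .
    have dz: "gd A X S z = (\<lambda>_. 0)"
    proof
      fix I show "gd A X S z I = 0" unfolding z_def P1[OF A0ne z'c] dz' by (simp add: Psi_def)
    qed
    have zk: "z \<in> gker A X S" unfolding gker_def using zc dz by simp
    have zi: "z \<notin> gim A X S"
    proof
      assume "z \<in> gim A X S"
      then obtain y where y: "y \<in> gch A X S" "z = gd A X S y" unfolding gim_def by blast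
      define g where "g = (\<lambda>I. y I - gd A X S (hop y) I)"
      have zE: "\<And>I. I \<notin> E \<Longrightarrow> z I = 0" unfolding z_def using P2[OF A0ne z'c] .
      have "\<And>I. hop (gd A X S y) I = 0" using H3[of "gd A X S y"] zE y(2) by simp
      then have gE: "\<And>I. I \<notin> E \<Longrightarrow> g I = 0" unfolding g_def using H2[OF y(1)] by simp
      have dg: "gd A X S g = z"
        unfolding g_def by (rule ext, subst gd_diff) (simp add: gd_gd finX y(2))
      have pc: "Phi g \<in> gch A1 X1 S" and pp: "Psi (Phi g) = g" using P3[OF A0ne gE] by auto
      have "\<And>I. Psi (\<lambda>J. z' J - gd A1 X1 S (\<lambda>K. - Phi g K) J) I = 0"
      proof -
        fix I
        have "gd A X S (Psi (Phi g)) I = - Psi (gd A1 X1 S (Phi g)) I" by (rule P1[OF A0ne pc])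
        then have "z I = - Psi (gd A1 X1 S (Phi g)) I" using pp dg by simp
        moreover have "gd A1 X1 S (\<lambda>K. - Phi g K) = (\<lambda>J. - gd A1 X1 S (Phi g) J)"
          using gd_scale[of A1 X1 S "-1" "Phi g"] by (simp add: fun_eq_iff)
        ultimately show "Psi (\<lambda>J. z' J - gd A1 X1 S (\<lambda>K. - Phi g K) J) I = 0"
          unfolding z_def Psi_def by auto
      qed
      moreover have "(\<lambda>J. z' J - gd A1 X1 S (\<lambda>K. - Phi g K) J) \<in> gch A1 X1 S"
        using z'c gd_ch[of A1 X1 S] unfolding gch_def by auto
      ultimately have "\<And>J. z' J - gd A1 X1 S (\<lambda>K. - Phi g K) J = 0"
        using P4[OF A0ne] by blast
      then have "z' = gd A1 X1 S (\<lambda>K. - Phi g K)" by (simp add: fun_eq_iff)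
      moreover have "(\<lambda>K. - Phi g K) \<in> gch A1 X1 S" using pc unfolding gch_def by auto
      ultimately show False using a(3) unfolding gim_def by blast
    qed
    have "gker A X S \<subseteq> {(\<lambda>I. w I + c * z I) | w c. w \<in> gim A X S}"
    proof
      fix f :: "nat set \<Rightarrow> 'k" assume f: "f \<in> gker A X S"
      obtain v where v: "v \<in> gker A1 X1 S" "f = (\<lambda>I. gd A X S (hop f) I + Psi v I)" using red[OF f] by blast
      then obtain w c where wc: "v = (\<lambda>I. w I + c * z' I)" "w \<in> gim A1 X1 S" using a(4) by blast
      then obtain y where y: "y \<in> gch A1 X1 S" "w = gd A1 X1 S y" unfolding gim_def by blast
      have "Psi v = (\<lambda>I. Psi w I + c * z I)" unfolding wc z_def Psi_def by auto
      then have "f = (\<lambda>I. (gd A X S (hop f) I - gd A X S (Psi y) I) + c * z I)"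
        using v(2) Psi_bd[OF y(1)] y(2) by (simp add: fun_eq_iff)
      moreover have "(\<lambda>I. gd A X S (hop f) I - gd A X S (Psi y) I) = gd A X S (\<lambda>I. hop f I - Psi y I)"
        by (rule ext, rule gd_diff[symmetric])
      moreover have "gd A X S (\<lambda>I. hop f I - Psi y I) \<in> gim A X S" unfolding gim_def
        using hop_diff_ch[OF hop_ch P2ch[OF A0ne y(1)]] by blast
      ultimately show "f \<in> {(\<lambda>I. w I + c * z I) | w c. w \<in> gim A X S}"
        by (intro in_span1[where c=c and w="gd A X S (\<lambda>I. hop f I - Psi y I)"]) (auto simp: fun_eq_iff gd_diff)
    qed
    then show ?thesis unfolding Good_def using a(1) crit_step[OF A0ne] zk zi by auto
  qed
qed

end

lemma good_all: "finite X \<Longrightarrow> ganick X S \<Longrightarrow> Good A X S TYPE('k::field)"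
proof (induction "card X" arbitrary: X A rule: less_induct)
  case less
  show ?case
  proof (cases "X = {}")
    case True then show ?thesis using good_base by simp
  next
    case False
    interpret st: step A X S using less.prems False by unfold_locales auto
    show ?thesis
    proof (rule st.step_good)
      have sub: "st.X1 \<subseteq> X - {st.x0}" by (rule st.X1_sub)
      then have "card st.X1 < card X"
        using st.x0X less.prems(1) by (meson Diff_subset card_mono card_Diff1_less le_less_trans finite_Diff)
      moreover have "finite st.X1" using sub less.prems(1) finite_subset by blast
      moreover have "ganick st.X1 S" using ganick_sub[OF less.prems(2)] sub by blast
      ultimately show "Good st.A1 st.X1 S TYPE('k)" using less.hyps by blast
    qed
  qed
qed



context vector_space begin

lemma dim_plus_one:
  assumes W: "subspace W" "W \<subseteq> span F" "finite F" "z \<notin> W"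
    and V: "V = {w + c *s z | w c. w \<in> W}"
  shows "dim V = dim W + 1"
proof -
  have sW: "span W = W" using W(1) by simp
  have "V = span (insert z W)"
    unfolding V span_insert sW
  proof (intro equalityI subsetI)
    fix x assume "x \<in> {w + c *s z |w c. w \<in> W}"
    then obtain w c where "x = w + c *s z" "w \<in> W" by blast
    then show "x \<in> {x. \<exists>k. x - k *s z \<in> W}" by (auto intro!: exI[of _ c])
  next
    fix x assume "x \<in> {x. \<exists>k. x - k *s z \<in> W}"
    then obtain k where "x - k *s z \<in> W" by blast
    moreover have "x = (x - k *s z) + k *s z" by simp
    ultimately show "x \<in> {w + c *s z |w c. w \<in> W}" by blast
  qed
  then have dV: "dim V = dim (insert z W)" by simp
  obtain B where B: "B \<subseteq> W" "independent B" "W \<subseteq> span B" "card B = dim W"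
    using basis_exists by blast
  have fB: "finite B" using independent_span_bound[OF W(3) B(2)] B(1) W(2) by auto
  have sB: "span B = W"
  proof
    show "span B \<subseteq> W" using span_mono[OF B(1)] sW by simp
    show "W \<subseteq> span B" by (rule B(3))
  qed
  have zB: "z \<notin> span B" using sB W(4) by simp
  have iB: "independent (insert z B)" by (rule independent_insertI[OF zB B(2)])
  have "span (insert z B) = span (insert z W)" unfolding span_insert sB sW ..
  then have "dim (insert z W) = card (insert z B)" using dim_eq_card[OF _ iB] by simp

  have znB: "z \<notin> B" using zB span_base[of z B] by blast
  have "card (insert z B) = card B + 1" using fB znB by simp
  then show ?thesis using dV B(4) \<open>dim (insert z W) = card (insert z B)\<close> by simp
qed

end

lemma vs_fscale: "vector_space (fscale :: 'k::field \<Rightarrow> (nat set \<Rightarrow> 'k) \<Rightarrow> _)"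
  unfolding vector_space_def fscale_def
  by (auto simp: fun_eq_iff algebra_simps)

lemma fun_sum_apply: "finite B \<Longrightarrow> (\<Sum>i\<in>B. g i) x = (\<Sum>i\<in>B. (g i x :: 'a::comm_monoid_add))"
  by (induct B rule: finite_induct) auto

definition unitv :: "nat set \<Rightarrow> nat set \<Rightarrow> 'k::field" where
  "unitv I J = (if J = I then 1 else 0)"

lemma gch_span:
  assumes "finite X"
  shows "(gch A X S :: (nat set \<Rightarrow> 'k::field) set)
     \<subseteq> module.span fscale (unitv ` gB A X S)"
proof
  interpret v: vector_space "fscale :: 'k \<Rightarrow> (nat set \<Rightarrow> 'k) \<Rightarrow> _" by (rule vs_fscale)
  have fin: "finite (gB A X S)" using assms unfolding gB_def by (simp add: finite_Pow_iff)
  fix f :: "nat set \<Rightarrow> 'k" assume f: "f \<in> gch A X S"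
  have "f = (\<Sum>I\<in>gB A X S. fscale (f I) (unitv I))"
  proof
    fix J
    have "(\<Sum>I\<in>gB A X S. fscale (f I) (unitv I)) J = (\<Sum>I\<in>gB A X S. f I * unitv I J)"
      by (simp add: fun_sum_apply[OF fin] fscale_def)
    also have "\<dots> = f J"
    proof (cases "J \<in> gB A X S")
      case True
      then show ?thesis unfolding unitv_def using fin by (simp add: if_distrib cong: if_cong)
    next
      case False
      have "f J = 0" using f False unfolding gch_def by auto
      moreover have "(\<Sum>I\<in>gB A X S. f I * unitv I J) = 0"
        using False by (intro sum.neutral) (auto simp: unitv_def)
      ultimately show ?thesis by simp
    qed
    finally show "f J = (\<Sum>I\<in>gB A X S. fscale (f I) (unitv I)) J" by simp
  qed
  also have "\<dots> \<in> v.span (unitv ` gB A X S)"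
    by (intro v.span_sum v.span_scale v.span_base) auto
  finally show "f \<in> v.span (unitv ` gB A X S)" .
qed

lemma gim_subspace: "module.subspace fscale (gim A X S :: (nat set \<Rightarrow> 'k::field) set)"
proof -
  interpret v: vector_space "fscale :: 'k \<Rightarrow> (nat set \<Rightarrow> 'k) \<Rightarrow> _" by (rule vs_fscale)
  show ?thesis
    unfolding v.subspace_def
  proof (intro conjI ballI allI)
    show "0 \<in> gim A X S" using zero_im[of A X S] by (simp add: zero_fun_def)
  next
    fix x y :: "nat set \<Rightarrow> 'k" assume "x \<in> gim A X S" "y \<in> gim A X S"
    then obtain a b where ab: "a \<in> gch A X S" "b \<in> gch A X S" "x = gd A X S a" "y = gd A X S b"
      unfolding gim_def by blast
    have "x + y = gd A X S (\<lambda>I. a I + b I)" using ab by (simp add: fun_eq_iff gd_add)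
    moreover have "(\<lambda>I. a I + b I) \<in> gch A X S" using ab unfolding gch_def by auto
    ultimately show "x + y \<in> gim A X S" unfolding gim_def by blast
  next
    fix c :: 'k and x :: "nat set \<Rightarrow> 'k" assume "x \<in> gim A X S"
    then obtain a where ab: "a \<in> gch A X S" "x = gd A X S a" unfolding gim_def by blast
    have "fscale c x = gd A X S (\<lambda>I. c * a I)" using ab by (simp add: fun_eq_iff gd_scale fscale_def)
    moreover have "(\<lambda>I. c * a I) \<in> gch A X S" using ab unfolding gch_def by auto
    ultimately show "fscale c x \<in> gim A X S" unfolding gim_def by blast
  qed
qed

lemma im_ker: "finite X \<Longrightarrow> gim A X S \<subseteq> (gker A X S :: (nat set \<Rightarrow> 'k::field) set)"
  unfolding gim_def gker_def using gd_ch gd_gd by (auto simp: fun_eq_iff)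

lemma hom_dim:
  assumes "finite X" "ganick X S"
  shows "vector_space.dim (fscale :: 'k::field \<Rightarrow> _) (gker A X S :: (nat set \<Rightarrow> 'k) set)
       - vector_space.dim (fscale :: 'k \<Rightarrow> _) (gim A X S :: (nat set \<Rightarrow> 'k) set) = card (gcrit A X S)"
proof -
  interpret v: vector_space "fscale :: 'k \<Rightarrow> (nat set \<Rightarrow> 'k) \<Rightarrow> _" by (rule vs_fscale)
  have ik: "gim A X S \<subseteq> (gker A X S :: (nat set \<Rightarrow> 'k) set)" using im_ker[OF assms(1)] .
  from good_all[OF assms, of A, where 'k='k, unfolded Good_def] show ?thesis
  proof
    assume a: "gcrit A X S = {} \<and> (gker A X S :: (nat set \<Rightarrow> 'k) set) \<subseteq> gim A X S"
    then have "gker A X S = (gim A X S :: (nat set \<Rightarrow> 'k) set)" using ik by blast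
    then show ?thesis using a by simp
  next
    assume "\<exists>I0 (z :: nat set \<Rightarrow> 'k). gcrit A X S = {I0} \<and> z \<in> gker A X S \<and> z \<notin> gim A X S \<and>
        gker A X S \<subseteq> {(\<lambda>I. w I + c * z I) | w c. w \<in> gim A X S}"
    then obtain I0 and z :: "nat set \<Rightarrow> 'k" where a: "gcrit A X S = {I0}" "z \<in> gker A X S"
      "z \<notin> gim A X S" "gker A X S \<subseteq> {(\<lambda>I. w I + c * z I) | w c. w \<in> gim A X S}" by blast
    have eq: "gker A X S = {w + fscale c z | w c. w \<in> gim A X S}"
    proof (intro equalityI subsetI)
      fix f :: "nat set \<Rightarrow> 'k" assume "f \<in> gker A X S"
      then obtain w c where "f = (\<lambda>I. w I + c * z I)" "w \<in> gim A X S" using a(4) by blast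
      then have "f = w + fscale c z" "w \<in> gim A X S" by (auto simp: fun_eq_iff fscale_def)
      then show "f \<in> {w + fscale c z | w c. w \<in> gim A X S}" by blast
    next
      fix f :: "nat set \<Rightarrow> 'k" assume "f \<in> {w + fscale c z | w c. w \<in> gim A X S}"
      then obtain w c where f: "f = w + fscale c z" "w \<in> gim A X S" by blast
      then have w: "w \<in> gch A X S" "gd A X S w = (\<lambda>_. 0)" using ik unfolding gker_def by auto
      have z: "z \<in> gch A X S" "gd A X S z = (\<lambda>_. 0)" using a(2) unfolding gker_def by auto
      have "f = (\<lambda>I. w I + c * z I)" using f by (simp add: fun_eq_iff fscale_def)
      moreover have "gd A X S (\<lambda>I. w I + c * z I) = (\<lambda>_. 0)"
        by (rule ext) (simp add: gd_add gd_scale w z)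
      moreover have "(\<lambda>I. w I + c * z I) \<in> gch A X S" using w z unfolding gch_def by auto
      ultimately show "f \<in> gker A X S" unfolding gker_def by simp
    qed
    have sp: "gim A X S \<subseteq> v.span (unitv ` gB A X S)"
      using gch_span[OF assms(1)] unfolding gim_def using gd_ch by blast
    have fin: "finite (unitv ` gB A X S :: (nat set \<Rightarrow> 'k) set)"
      using assms(1) unfolding gB_def by (simp add: finite_Pow_iff)
    have "v.dim (gker A X S) = v.dim (gim A X S) + 1"
      by (rule v.dim_plus_one[OF gim_subspace sp fin a(3) eq])
    then show ?thesis using a(1) by simp
  qed
qed



lemma ab_basis_eq: "ab_basis T Ss = gB (internal_edges T) {0..<length Ss} ((!) Ss)"
  unfolding ab_basis_def indecomposable_def gB_def covers_def by auto

lemma chains_eq: "chains T Ss = gch (internal_edges T) {0..<length Ss} ((!) Ss)"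
  unfolding chains_def gch_def ab_basis_eq ..

lemma ab_diff_eq: "ab_diff T Ss = gd (internal_edges T) {0..<length Ss} ((!) Ss)"
  unfolding ab_diff_def[abs_def] gd_def[abs_def] ab_basis_eq ..

lemma crit_eq: "critical_elements T Ss = gcrit (internal_edges T) {0..<length Ss} ((!) Ss)"
  unfolding critical_elements_def gcrit_def ab_basis_eq by auto

lemma anick_g: "anick_numbering G T Ss \<Longrightarrow> ganick {0..<length Ss} ((!) Ss)"
  unfolding anick_numbering_def ganick_def by auto

theorem mainTheorem3:
  fixes ar :: "'m \<Rightarrow> nat"
    and G :: "'m tree set"
    and num :: "'m tree \<Rightarrow> nat list set list"
    and T :: "'m tree"
  assumes "G \<subseteq> {S. tree_monomial ar S}"
    and "\<forall>S. tree_monomial ar S \<longrightarrow> anick_numbering G S (num S)"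
    and "tree_monomial ar T"
  shows "quillen_homology_dim TYPE('k::field) T (num T) = card (critical_elements T (num T))"
proof -
  have an: "ganick {0..<length (num T)} ((!) (num T))"
    using anick_g assms(2,3) by blast
  have "quillen_homology_dim TYPE('k::field) T (num T) =
     vector_space.dim (fscale :: 'k \<Rightarrow> _) (gker (internal_edges T) {0..<length (num T)} ((!) (num T)) :: (nat set \<Rightarrow> 'k) set)
     - vector_space.dim (fscale :: 'k \<Rightarrow> _) (gim (internal_edges T) {0..<length (num T)} ((!) (num T)) :: (nat set \<Rightarrow> 'k) set)"
    unfolding quillen_homology_dim_def gker_def gim_def chains_eq ab_diff_eq ..
  also have "\<dots> = card (critical_elements T (num T))"
    unfolding crit_eq by (rule hom_dim[OF _ an]) simp
  finally show ?thesis .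
qed


end
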